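(* Let $m\in\{1,2\}$, $\gamma\in(1,2]$ and $z\in[z_m,z_M]$, and set $k=k(\gamma,z)=-\frac{(1+V_6)^2}{V_6}$ and $B_k(V)=\sqrt{-kV}$. If $\bar V\in(V_1,V_6)$ and $\bar C>B_k(\bar V)$, then the solution of $\frac{dC}{dV}=\frac FG$ on $[V_1,\bar V]$ with $C(\bar V)=\bar C$ satisfies $C(V)>B_k(V)$ for all $V\in[V_1,\bar V]$. Moreover, for every $z\in[z_g,z_M]$, the solution $C(\cdot;\gamma,z,P_6)$ satisfies $C(V;\gamma,z,P_6)>B_k(V)$ for all $V\in[V_1,V_6)$.
   Context: Fix $m\in\{1,2\}$. For $z>0$ put $\lambda=1+m\gamma z$, $a_1=1+\frac{m(\gamma-1)}{2}$, $a_2=\frac{m(\gamma-1)+mz\gamma(\gamma-3)}{2}$, $a_3=\frac{mz\gamma(\gamma-1)}{2}$, $G(V,C;\gamma,z)=C^2[(m+1)V+2mz]-V(1+V)(\lambda+V)$, $F(V,C;\gamma,z)=C\{C^2[1+\frac{mz}{1+V}]-a_1(1+V)^2+a_2(1+V)-a_3\}$; ODE $\frac{dC}{dV}=\frac FG$. $V_1=-\frac2{\gamma+1}$. $z_M=(\sqrt\gamma+\sqrt2)^{-2}$, $z_m=\frac{\gamma-1}{(2\gamma-1)(\gamma+1)}$, $w(z)=\sqrt{1-2(\gamma+2)z+(\gamma-2)^2z^2}$, $V_6=\frac{-1+(\gamma-2)z-w}{2}$, $C_6=1+V_6$, $P_6=(V_6,C_6)$. $z_g$: for $\gamma\in(1,2]$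 the value of $z$ with $V_6(z)=\frac{-2(1+m\gamma z)}{\gamma+1+m(\gamma-1)}$; explicitly $z_g=\frac{\sqrt{\gamma^2+(\gamma-1)^2}-\gamma}{\gamma(\gamma-1)}$ ($m=1$), $z_g=\frac{\sqrt{(2\gamma^2-\gamma+1)^2+2\gamma(\gamma-1)[4\gamma(\gamma-1)+8/3]}-(2\gamma^2-\gamma+1)}{\gamma[4\gamma(\gamma-1)+8/3]}$ ($m=2$). For $z\in[z_m,z_M]$, $C(\cdot;\gamma,z,P_6):[V_1,V_6]\to(0,\infty)$ is the real-analytic solution of the ODE near $V_6$ with $C(V_6)=C_6$ and $C'(V_6)$ equal to the unique negative root $c_1$ of $-G_Cc^2+(F_C-G_V)c+F_V=0$ (partials at $P_6$), continued to $[V_1,V_6]$. *)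

theory Defs
  imports "HOL-Analysis.Analysis"
begin

definition lam :: "nat \<Rightarrow> real \<Rightarrow> real \<Rightarrow> real" where
  "lam m g z = 1 + real m * g * z"

definition a1 :: "nat \<Rightarrow> real \<Rightarrow> real" where
  "a1 m g = 1 + real m * (g - 1) / 2"

definition a2 :: "nat \<Rightarrow> real \<Rightarrow> real \<Rightarrow> real" where
  "a2 m g z = (real m * (g - 1) + real m * z * g * (g - 3)) / 2"

definition a3 :: "nat \<Rightarrow> real \<Rightarrow> real \<Rightarrow> real" where
  "a3 m g z = real m * z * g * (g - 1) / 2"

definition GG :: "nat \<Rightarrow> real \<Rightarrow> real \<Rightarrow> real \<Rightarrow> real \<Rightarrow> real" where
  "GG m g z V C = C\<^sup>2 * ((real m + 1) * V + 2 * real m * z) - V * (1 + V) * (lam m g z + V)"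

definition FF :: "nat \<Rightarrow> real \<Rightarrow> real \<Rightarrow> real \<Rightarrow> real \<Rightarrow> real" where
  "FF m g z V C = C * (C\<^sup>2 * (1 + real m * z / (1 + V)) - a1 m g * (1 + V)\<^sup>2
                       + a2 m g z * (1 + V) - a3 m g z)"

definition V1 :: "real \<Rightarrow> real" where
  "V1 g = - 2 / (g + 1)"

definition zM :: "real \<Rightarrow> real" where
  "zM g = 1 / (sqrt g + sqrt 2)\<^sup>2"

definition zm :: "real \<Rightarrow> real" where
  "zm g = (g - 1) / ((2 * g - 1) * (g + 1))"

definition ww :: "real \<Rightarrow> real \<Rightarrow> real" where
  "ww g z = sqrt (1 - 2 * (g + 2) * z + (g - 2)\<^sup>2 * z\<^sup>2)"

definition V6 :: "real \<Rightarrow> real \<Rightarrow> real" where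
  "V6 g z = (-1 + (g - 2) * z - ww g z) / 2"

definition C6 :: "real \<Rightarrow> real \<Rightarrow> real" where
  "C6 g z = 1 + V6 g z"

definition zg :: "nat \<Rightarrow> real \<Rightarrow> real" where
  "zg m g = (if m = 1 then (sqrt (g\<^sup>2 + (g - 1)\<^sup>2) - g) / (g * (g - 1))
     else (sqrt ((2 * g\<^sup>2 - g + 1)\<^sup>2 + 2 * g * (g - 1) * (4 * g * (g - 1) + 8 / 3))
             - (2 * g\<^sup>2 - g + 1)) / (g * (4 * g * (g - 1) + 8 / 3)))"

definition kk :: "real \<Rightarrow> real \<Rightarrow> real" where
  "kk g z = - (1 + V6 g z)\<^sup>2 / V6 g z"

definition Bk :: "real \<Rightarrow> real \<Rightarrow> real \<Rightarrow> real" where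
  "Bk g z V = sqrt (- kk g z * V)"

definition solves_ODE_on :: "nat \<Rightarrow> real \<Rightarrow> real \<Rightarrow> (real \<Rightarrow> real) \<Rightarrow> real set \<Rightarrow> bool" where
  "solves_ODE_on m g z C S \<longleftrightarrow>
     (\<forall>V\<in>S. GG m g z V (C V) \<noteq> 0 \<and>
        (C has_real_derivative (FF m g z V (C V) / GG m g z V (C V))) (at V within S))"

definition is_c1 :: "nat \<Rightarrow> real \<Rightarrow> real \<Rightarrow> real \<Rightarrow> bool" where
  "is_c1 m g z c \<longleftrightarrow> c < 0 \<and>
     (let GC = deriv (\<lambda>C. GG m g z (V6 g z) C) (C6 g z);
          GV = deriv (\<lambda>V. GG m g z V (C6 g z)) (V6 g z);
          FC = deriv (\<lambda>C. FF m g z (V6 g z) C) (C6 g z);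
          FV = deriv (\<lambda>V. FF m g z V (C6 g z)) (V6 g z)
      in - GC * c\<^sup>2 + (FC - GV) * c + FV = 0)"

definition analytic_left_at :: "(real \<Rightarrow> real) \<Rightarrow> real \<Rightarrow> bool" where
  "analytic_left_at C x0 \<longleftrightarrow>
     (\<exists>\<delta>>0. \<exists>a :: nat \<Rightarrow> real. \<forall>V\<in>{x0 - \<delta>..x0}. (\<lambda>n. a n * (V - x0) ^ n) sums C V)"

definition is_P6_solution :: "nat \<Rightarrow> real \<Rightarrow> real \<Rightarrow> (real \<Rightarrow> real) \<Rightarrow> bool" where
  "is_P6_solution m g z C \<longleftrightarrow>
     (\<forall>V\<in>{V1 g..V6 g z}. C V > 0) \<and>
     C (V6 g z) = C6 g z \<and>
     analytic_left_at C (V6 g z) \<and>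
     (\<exists>c. is_c1 m g z c \<and> (C has_real_derivative c) (at (V6 g z) within {V1 g..V6 g z})) \<and>
     continuous_on {V1 g..V6 g z} C \<and>
     solves_ODE_on m g z C {V1 g..<V6 g z}"

end

theory Submission
  imports Defs
begin

definition A0c :: "real \<Rightarrow> real \<Rightarrow> real \<Rightarrow> real" where
 "A0c m g s = m * g * s^2 + m * g * s + 2 * m * s^3 + 6 * m * s^2 + 6 * m * s + 2 * m + g * s - 2 * s - 2"
definition A1c :: "real \<Rightarrow> real \<Rightarrow> real \<Rightarrow> real" where
 "A1c m g s = - m * g^2 * s^2 + 4 * m * g * s^2 + 3 * m * g * s + 2 * m * s + 2 * m - g * s^2 + g * s + 2 * s^2 - 2"
definition A2c :: "real \<Rightarrow> real \<Rightarrow> real \<Rightarrow> real" where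
 "A2c m g s = - m * g^2 * s^2 + 3 * m * g * s^2 + 2 * m * g * s - 2 * m * s^2 - 2 * m * s - g * s^2 + 2 * s^2 + 2 * s"
definition RP :: "real \<Rightarrow> real \<Rightarrow> real \<Rightarrow> real \<Rightarrow> real" where
 "RP m g s V = A2c m g s * V^2 + A1c m g s * V + A0c m g s"
definition qc :: "real \<Rightarrow> real \<Rightarrow> real \<Rightarrow> real" where
 "qc m g s = m * g^2 * s^2 / 2 - 3 * m * g * s^2 / 2 - 2 * m * g * s - m * g + 3 * m * s^2 + 4 * m * s + m
   + 2 * g * s^2 + 2 * g * s - 4 * s^2 - 8 * s - 4"

lemma cert_E0_1:
  fixes g s xx tt rr :: real
  assumes "xx = g - 1" "tt = (g+1) * s + 2" "rr = (g+1) * (-2 * s - 1)"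
  shows "64 * ((g+1)^3 * (4 * A2c 1 g s - 2 * (g+1) * A1c 1 g s + (g+1)^2 * A0c 1 g s)) = - ((512 * tt^6 + 3328 * xx * tt^5 + 8832 * xx^2 * tt^4 + 12352 * xx^3 * tt^3 + 9664 * xx^4 * tt^2 + 4032 * xx^5 * tt + 704 * xx^6) + (64 * tt^2 * rr^4 + 448 * tt^3 * rr^3 + 1152 * tt^4 * rr^2 + 1280 * tt^5 * rr + 192 * xx * tt * rr^4 + 1728 * xx * tt^2 * rr^3 + 5440 * xx * tt^3 * rr^2 + 7168 * xx * tt^4 * rr + 96 * xx^2 * rr^4 + 1920 * xx^2 * tt * rr^3 + 8992 * xx^2 * tt^2 * rr^2 + 15488 * xx^2 * tt^3 * rr + 608 * xx^3 * rr^3 + 6208 * xx^3 * tt * rr^2 + 16288 * xx^3 * tt^2 * rr + 1504 * xx^4 * rr^2 + 8384 * xx^4 * tt * rr + 1696 * xx^5 * rr))"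
  unfolding assms A0c_def A1c_def A2c_def qc_def
  by algebra

lemma sign_E0_1:
  fixes xx tt rr :: real
  assumes "0 < xx" "0 < tt" "0 \<le> rr"
  shows "0 < (512 * tt^6 + 3328 * xx * tt^5 + 8832 * xx^2 * tt^4 + 12352 * xx^3 * tt^3 + 9664 * xx^4 * tt^2 + 4032 * xx^5 * tt + 704 * xx^6) + (64 * tt^2 * rr^4 + 448 * tt^3 * rr^3 + 1152 * tt^4 * rr^2 + 1280 * tt^5 * rr + 192 * xx * tt * rr^4 + 1728 * xx * tt^2 * rr^3 + 5440 * xx * tt^3 * rr^2 + 7168 * xx * tt^4 * rr + 96 * xx^2 * rr^4 + 1920 * xx^2 * tt * rr^3 + 8992 * xx^2 * tt^2 * rr^2 + 15488 * xx^2 * tt^3 * rr + 608 * xx^3 * rr^3 + 6208 * xx^3 * tt * rr^2 + 16288 * xx^3 * tt^2 * rr + 1504 * xx^4 * rr^2 + 8384 * xx^4 * tt * rr + 1696 * xx^5 * rr)"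
proof -
  have "0 < (512 * tt^6 + 3328 * xx * tt^5 + 8832 * xx^2 * tt^4 + 12352 * xx^3 * tt^3 + 9664 * xx^4 * tt^2 + 4032 * xx^5 * tt + 704 * xx^6)" using assms by (intro add_pos_pos mult_pos_pos zero_less_power) auto
  moreover have "0 \<le> (64 * tt^2 * rr^4 + 448 * tt^3 * rr^3 + 1152 * tt^4 * rr^2 + 1280 * tt^5 * rr + 192 * xx * tt * rr^4 + 1728 * xx * tt^2 * rr^3 + 5440 * xx * tt^3 * rr^2 + 7168 * xx * tt^4 * rr + 96 * xx^2 * rr^4 + 1920 * xx^2 * tt * rr^3 + 8992 * xx^2 * tt^2 * rr^2 + 15488 * xx^2 * tt^3 * rr + 608 * xx^3 * rr^3 + 6208 * xx^3 * tt * rr^2 + 16288 * xx^3 * tt^2 * rr + 1504 * xx^4 * rr^2 + 8384 * xx^4 * tt * rr + 1696 * xx^5 * rr)" using assms by (intro add_nonneg_nonneg mult_nonneg_nonneg zero_le_power) auto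
  ultimately show ?thesis by linarith
qed

lemma cert_E0_2:
  fixes g s xx tt rr :: real
  assumes "xx = g - 1" "tt = (g+1) * s + 2" "rr = (g+1) * (-2 * s - 1)"
  shows "64 * ((g+1)^3 * (4 * A2c 2 g s - 2 * (g+1) * A1c 2 g s + (g+1)^2 * A0c 2 g s)) = - ((1024 * tt^6 + 5888 * xx * tt^5 + 13568 * xx^2 * tt^4 + 16064 * xx^3 * tt^3 + 10304 * xx^4 * tt^2 + 3392 * xx^5 * tt + 448 * xx^6) + (128 * tt^2 * rr^4 + 896 * tt^3 * rr^3 + 2304 * tt^4 * rr^2 + 2560 * tt^5 * rr + 352 * xx * tt * rr^4 + 3168 * xx * tt^2 * rr^3 + 9920 * xx * tt^3 * rr^2 + 12928 * xx * tt^4 * rr + 128 * xx^2 * rr^4 + 2976 * xx^2 * tt * rr^3 + 14272 * xx^2 * tt^2 * rr^2 + 24448 * xx^2 * tt^3 * rr + 608 * xx^3 * rr^3 + 7808 * xx^3 * tt * rr^2 + 21472 * xx^3 * tt^2 * rr + 1152 * xx^4 * rr^2 + 8512 * xx^4 * tt * rr + 1120 * xx^5 * rr))"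
  unfolding assms A0c_def A1c_def A2c_def qc_def
  by algebra

lemma sign_E0_2:
  fixes xx tt rr :: real
  assumes "0 < xx" "0 < tt" "0 \<le> rr"
  shows "0 < (1024 * tt^6 + 5888 * xx * tt^5 + 13568 * xx^2 * tt^4 + 16064 * xx^3 * tt^3 + 10304 * xx^4 * tt^2 + 3392 * xx^5 * tt + 448 * xx^6) + (128 * tt^2 * rr^4 + 896 * tt^3 * rr^3 + 2304 * tt^4 * rr^2 + 2560 * tt^5 * rr + 352 * xx * tt * rr^4 + 3168 * xx * tt^2 * rr^3 + 9920 * xx * tt^3 * rr^2 + 12928 * xx * tt^4 * rr + 128 * xx^2 * rr^4 + 2976 * xx^2 * tt * rr^3 + 14272 * xx^2 * tt^2 * rr^2 + 24448 * xx^2 * tt^3 * rr + 608 * xx^3 * rr^3 + 7808 * xx^3 * tt * rr^2 + 21472 * xx^3 * tt^2 * rr + 1152 * xx^4 * rr^2 + 8512 * xx^4 * tt * rr + 1120 * xx^5 * rr)"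
proof -
  have "0 < (1024 * tt^6 + 5888 * xx * tt^5 + 13568 * xx^2 * tt^4 + 16064 * xx^3 * tt^3 + 10304 * xx^4 * tt^2 + 3392 * xx^5 * tt + 448 * xx^6)" using assms by (intro add_pos_pos mult_pos_pos zero_less_power) auto
  moreover have "0 \<le> (128 * tt^2 * rr^4 + 896 * tt^3 * rr^3 + 2304 * tt^4 * rr^2 + 2560 * tt^5 * rr + 352 * xx * tt * rr^4 + 3168 * xx * tt^2 * rr^3 + 9920 * xx * tt^3 * rr^2 + 12928 * xx * tt^4 * rr + 128 * xx^2 * rr^4 + 2976 * xx^2 * tt * rr^3 + 14272 * xx^2 * tt^2 * rr^2 + 24448 * xx^2 * tt^3 * rr + 608 * xx^3 * rr^3 + 7808 * xx^3 * tt * rr^2 + 21472 * xx^3 * tt^2 * rr + 1152 * xx^4 * rr^2 + 8512 * xx^4 * tt * rr + 1120 * xx^5 * rr)" using assms by (intro add_nonneg_nonneg mult_nonneg_nonneg zero_le_power) auto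
  ultimately show ?thesis by linarith
qed

lemma cert_E1_1:
  fixes g s xx tt rr :: real
  assumes "xx = g - 1" "tt = (g+1) * s + 2" "rr = (g+1) * (-2 * s - 1)"
  shows "32 * ((g+1)^2 * (- 4 * A2c 1 g s + (g+1) * A1c 1 g s)) = - ((128 * tt^5 + 640 * xx * tt^4 + 1344 * xx^2 * tt^3 + 1456 * xx^3 * tt^2 + 800 * xx^4 * tt + 176 * xx^5) + (16 * tt * rr^4 + 112 * tt^2 * rr^3 + 288 * tt^3 * rr^2 + 320 * tt^4 * rr + 16 * xx * rr^4 + 224 * xx * tt * rr^3 + 864 * xx * tt^2 * rr^2 + 1280 * xx * tt^3 * rr + 128 * xx^2 * rr^3 + 944 * xx^2 * tt * rr^2 + 2048 * xx^2 * tt^2 * rr + 384 * xx^3 * rr^2 + 1536 * xx^3 * tt * rr + 448 * xx^4 * rr))"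
  unfolding assms A0c_def A1c_def A2c_def qc_def
  by algebra

lemma sign_E1_1:
  fixes xx tt rr :: real
  assumes "0 < xx" "0 < tt" "0 \<le> rr"
  shows "0 < (128 * tt^5 + 640 * xx * tt^4 + 1344 * xx^2 * tt^3 + 1456 * xx^3 * tt^2 + 800 * xx^4 * tt + 176 * xx^5) + (16 * tt * rr^4 + 112 * tt^2 * rr^3 + 288 * tt^3 * rr^2 + 320 * tt^4 * rr + 16 * xx * rr^4 + 224 * xx * tt * rr^3 + 864 * xx * tt^2 * rr^2 + 1280 * xx * tt^3 * rr + 128 * xx^2 * rr^3 + 944 * xx^2 * tt * rr^2 + 2048 * xx^2 * tt^2 * rr + 384 * xx^3 * rr^2 + 1536 * xx^3 * tt * rr + 448 * xx^4 * rr)"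
proof -
  have "0 < (128 * tt^5 + 640 * xx * tt^4 + 1344 * xx^2 * tt^3 + 1456 * xx^3 * tt^2 + 800 * xx^4 * tt + 176 * xx^5)" using assms by (intro add_pos_pos mult_pos_pos zero_less_power) auto
  moreover have "0 \<le> (16 * tt * rr^4 + 112 * tt^2 * rr^3 + 288 * tt^3 * rr^2 + 320 * tt^4 * rr + 16 * xx * rr^4 + 224 * xx * tt * rr^3 + 864 * xx * tt^2 * rr^2 + 1280 * xx * tt^3 * rr + 128 * xx^2 * rr^3 + 944 * xx^2 * tt * rr^2 + 2048 * xx^2 * tt^2 * rr + 384 * xx^3 * rr^2 + 1536 * xx^3 * tt * rr + 448 * xx^4 * rr)" using assms by (intro add_nonneg_nonneg mult_nonneg_nonneg zero_le_power) auto
  ultimately show ?thesis by linarith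
qed

lemma cert_E1_2:
  fixes g s xx tt rr :: real
  assumes "xx = g - 1" "tt = (g+1) * s + 2" "rr = (g+1) * (-2 * s - 1)"
  shows "32 * ((g+1)^2 * (- 4 * A2c 2 g s + (g+1) * A1c 2 g s)) = - ((64 * tt^5 + 256 * xx * tt^4 + 624 * xx^2 * tt^3 + 928 * xx^3 * tt^2 + 688 * xx^4 * tt + 192 * xx^5) + (24 * tt * rr^4 + 152 * tt^2 * rr^3 + 336 * tt^3 * rr^2 + 288 * tt^4 * rr + 8 * xx * rr^4 + 176 * xx * tt * rr^3 + 672 * xx * tt^2 * rr^2 + 832 * xx * tt^3 * rr + 56 * xx^2 * rr^3 + 568 * xx^2 * tt * rr^2 + 1224 * xx^2 * tt^2 * rr + 280 * xx^3 * rr^2 + 1104 * xx^3 * tt * rr + 424 * xx^4 * rr))"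
  unfolding assms A0c_def A1c_def A2c_def qc_def
  by algebra

lemma sign_E1_2:
  fixes xx tt rr :: real
  assumes "0 < xx" "0 < tt" "0 \<le> rr"
  shows "0 < (64 * tt^5 + 256 * xx * tt^4 + 624 * xx^2 * tt^3 + 928 * xx^3 * tt^2 + 688 * xx^4 * tt + 192 * xx^5) + (24 * tt * rr^4 + 152 * tt^2 * rr^3 + 336 * tt^3 * rr^2 + 288 * tt^4 * rr + 8 * xx * rr^4 + 176 * xx * tt * rr^3 + 672 * xx * tt^2 * rr^2 + 832 * xx * tt^3 * rr + 56 * xx^2 * rr^3 + 568 * xx^2 * tt * rr^2 + 1224 * xx^2 * tt^2 * rr + 280 * xx^3 * rr^2 + 1104 * xx^3 * tt * rr + 424 * xx^4 * rr)"
proof -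
  have "0 < (64 * tt^5 + 256 * xx * tt^4 + 624 * xx^2 * tt^3 + 928 * xx^3 * tt^2 + 688 * xx^4 * tt + 192 * xx^5)" using assms by (intro add_pos_pos mult_pos_pos zero_less_power) auto
  moreover have "0 \<le> (24 * tt * rr^4 + 152 * tt^2 * rr^3 + 336 * tt^3 * rr^2 + 288 * tt^4 * rr + 8 * xx * rr^4 + 176 * xx * tt * rr^3 + 672 * xx * tt^2 * rr^2 + 832 * xx * tt^3 * rr + 56 * xx^2 * rr^3 + 568 * xx^2 * tt * rr^2 + 1224 * xx^2 * tt^2 * rr + 280 * xx^3 * rr^2 + 1104 * xx^3 * tt * rr + 424 * xx^4 * rr)" using assms by (intro add_nonneg_nonneg mult_nonneg_nonneg zero_le_power) auto
  ultimately show ?thesis by linarith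
qed

lemma cert_Eq_1:
  fixes g s xx tt rr :: real
  assumes "xx = g - 1" "tt = (g+1) * s + 2" "rr = (g+1) * (-2 * s - 1)"
  shows "16 * ((g+1)^2 * qc 1 g s) = - ((128 * tt^4 + 424 * xx * tt^3 + 508 * xx^2 * tt^2 + 256 * xx^3 * tt + 44 * xx^4) + (16 * tt * rr^3 + 96 * tt^2 * rr^2 + 192 * tt^3 * rr + 12 * xx * rr^3 + 160 * xx * tt * rr^2 + 484 * xx * tt^2 * rr + 60 * xx^2 * rr^2 + 384 * xx^2 * tt * rr + 92 * xx^3 * rr))"
  unfolding assms A0c_def A1c_def A2c_def qc_def
  by algebra

lemma sign_Eq_1:
  fixes xx tt rr :: real
  assumes "0 < xx" "0 < tt" "0 \<le> rr"
  shows "0 < (128 * tt^4 + 424 * xx * tt^3 + 508 * xx^2 * tt^2 + 256 * xx^3 * tt + 44 * xx^4) + (16 * tt * rr^3 + 96 * tt^2 * rr^2 + 192 * tt^3 * rr + 12 * xx * rr^3 + 160 * xx * tt * rr^2 + 484 * xx * tt^2 * rr + 60 * xx^2 * rr^2 + 384 * xx^2 * tt * rr + 92 * xx^3 * rr)"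
proof -
  have "0 < (128 * tt^4 + 424 * xx * tt^3 + 508 * xx^2 * tt^2 + 256 * xx^3 * tt + 44 * xx^4)" using assms by (intro add_pos_pos mult_pos_pos zero_less_power) auto
  moreover have "0 \<le> (16 * tt * rr^3 + 96 * tt^2 * rr^2 + 192 * tt^3 * rr + 12 * xx * rr^3 + 160 * xx * tt * rr^2 + 484 * xx * tt^2 * rr + 60 * xx^2 * rr^2 + 384 * xx^2 * tt * rr + 92 * xx^3 * rr)" using assms by (intro add_nonneg_nonneg mult_nonneg_nonneg zero_le_power) auto
  ultimately show ?thesis by linarith
qed

lemma cert_Eq_2:
  fixes g s xx tt rr :: real
  assumes "xx = g - 1" "tt = (g+1) * s + 2" "rr = (g+1) * (-2 * s - 1)"
  shows "16 * ((g+1)^2 * qc 2 g s) = - ((160 * tt^4 + 528 * xx * tt^3 + 624 * xx^2 * tt^2 + 304 * xx^3 * tt + 48 * xx^4) + (24 * tt * rr^3 + 136 * tt^2 * rr^2 + 256 * tt^3 * rr + 16 * xx * rr^3 + 208 * xx * tt * rr^2 + 616 * xx * tt^2 * rr + 64 * xx^2 * rr^2 + 456 * xx^2 * tt * rr + 96 * xx^3 * rr))"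
  unfolding assms A0c_def A1c_def A2c_def qc_def
  by algebra

lemma sign_Eq_2:
  fixes xx tt rr :: real
  assumes "0 < xx" "0 < tt" "0 \<le> rr"
  shows "0 < (160 * tt^4 + 528 * xx * tt^3 + 624 * xx^2 * tt^2 + 304 * xx^3 * tt + 48 * xx^4) + (24 * tt * rr^3 + 136 * tt^2 * rr^2 + 256 * tt^3 * rr + 16 * xx * rr^3 + 208 * xx * tt * rr^2 + 616 * xx * tt^2 * rr + 64 * xx^2 * rr^2 + 456 * xx^2 * tt * rr + 96 * xx^3 * rr)"
proof -
  have "0 < (160 * tt^4 + 528 * xx * tt^3 + 624 * xx^2 * tt^2 + 304 * xx^3 * tt + 48 * xx^4)" using assms by (intro add_pos_pos mult_pos_pos zero_less_power) auto
  moreover have "0 \<le> (24 * tt * rr^3 + 136 * tt^2 * rr^2 + 256 * tt^3 * rr + 16 * xx * rr^3 + 208 * xx * tt * rr^2 + 616 * xx * tt^2 * rr + 64 * xx^2 * rr^2 + 456 * xx^2 * tt * rr + 96 * xx^3 * rr)" using assms by (intro add_nonneg_nonneg mult_nonneg_nonneg zero_le_power) auto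
  ultimately show ?thesis by linarith
qed

lemma region_vars:
  fixes g s :: real
  assumes g1: "1 < g" and s1: "-2/(g+1) < s" and s2: "s \<le> -1/2"
  shows "0 < g - 1" "0 < (g+1) * s + 2" "0 \<le> (g+1) * (-2 * s - 1)"
proof -
  show "0 < g - 1" using g1 by simp
  have gp: "0 < g + 1" using g1 by simp
  have "(-2/(g+1)) * (g+1) < s * (g+1)" using s1 gp by (rule mult_strict_right_mono)
  moreover have "(-2/(g+1)) * (g+1) = -2" using gp by (simp add: divide_eq_eq algebra_simps)
  ultimately have "-2 < (g+1) * s" by (simp add: mult.commute)
  then show "0 < (g+1) * s + 2" by simp
  show "0 \<le> (g+1) * (-2 * s - 1)" using g1 s2 by (intro mult_nonneg_nonneg) auto
qed

lemma RP_V1_neg: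
  fixes mr g s :: real
  assumes m: "mr = 1 \<or> mr = 2" and g1: "1 < g" and s1: "-2/(g+1) < s" and s2: "s \<le> -1/2"
  shows "RP mr g s (-2/(g+1)) < 0"
proof -
  note rv = region_vars[OF g1 s1 s2]
  have neg: "64 * ((g+1)^3 * (4 * A2c mr g s - 2 * (g+1) * A1c mr g s + (g+1)^2 * A0c mr g s)) < 0"
    using m
  proof
    assume "mr = 1" then show ?thesis
      using cert_E0_1[OF refl refl refl, of g s] sign_E0_1[OF rv] by simp
  next
    assume "mr = 2" then show ?thesis
      using cert_E0_2[OF refl refl refl, of g s] sign_E0_2[OF rv] by simp
  qed
  have gp: "0 < g + 1" using g1 by simp
  have eq: "(g+1)^2 * RP mr g s (-2/(g+1)) = 4 * A2c mr g s - 2 * (g+1) * A1c mr g s + (g+1)^2 * A0c mr g s"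
  proof -
    have h0: "(g+1) * (-2/(g+1)) = -2" using gp by (simp add: divide_eq_eq algebra_simps)
    have h1: "(g+1)^2 * (-2/(g+1))^2 = 4" unfolding power_mult_distrib[symmetric] h0 by simp
    have h2: "(g+1)^2 * (-2/(g+1)) = -2 * (g+1)" using gp by (simp add: power2_eq_square field_simps)
    have "(g+1)^2 * RP mr g s (-2/(g+1)) = A2c mr g s * ((g+1)^2 * (-2/(g+1))^2) + A1c mr g s * ((g+1)^2 * (-2/(g+1))) + (g+1)^2 * A0c mr g s"
      unfolding RP_def by (simp add: algebra_simps)
    then show ?thesis unfolding h1 h2 by (simp add: algebra_simps)
  qed
  have "(g+1)^3 * ((g+1)^2 * RP mr g s (-2/(g+1))) < 0" using neg eq by simp
  moreover have "0 < (g+1)^3 * (g+1)^2" using gp by simp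
  ultimately show ?thesis by (simp add: mult_less_0_iff)
qed

lemma RPd_V1_nonpos:
  fixes mr g s :: real
  assumes m: "mr = 1 \<or> mr = 2" and g1: "1 < g" and s1: "-2/(g+1) < s" and s2: "s \<le> -1/2"
  shows "2 * A2c mr g s * (-2/(g+1)) + A1c mr g s \<le> 0"
proof -
  note rv = region_vars[OF g1 s1 s2]
  have neg: "32 * ((g+1)^2 * (- 4 * A2c mr g s + (g+1) * A1c mr g s)) < 0"
    using m
  proof
    assume "mr = 1" then show ?thesis
      using cert_E1_1[OF refl refl refl, of g s] sign_E1_1[OF rv] by simp
  next
    assume "mr = 2" then show ?thesis
      using cert_E1_2[OF refl refl refl, of g s] sign_E1_2[OF rv] by simp
  qed
  have gp: "0 < g + 1" using g1 by simp
  have h0: "(g+1) * (-2/(g+1)) = -2" using gp by (simp add: divide_eq_eq algebra_simps)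
  have eq: "(g+1) * (2 * A2c mr g s * (-2/(g+1)) + A1c mr g s) = - 4 * A2c mr g s + (g+1) * A1c mr g s"
    using h0 by algebra
  have "(g+1)^2 * ((g+1) * (2 * A2c mr g s * (-2/(g+1)) + A1c mr g s)) < 0" using neg eq by simp
  then have "(g+1)^3 * (2 * A2c mr g s * (-2/(g+1)) + A1c mr g s) < 0" by (simp add: power3_eq_cube power2_eq_square mult.assoc)
  then show ?thesis using gp by (simp add: mult_less_0_iff)
qed

lemma qc_nonpos:
  fixes mr g s :: real
  assumes m: "mr = 1 \<or> mr = 2" and g1: "1 < g" and s1: "-2/(g+1) < s" and s2: "s \<le> -1/2"
  shows "qc mr g s \<le> 0"
proof -
  note rv = region_vars[OF g1 s1 s2]
  have neg: "16 * ((g+1)^2 * qc mr g s) < 0"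
    using m
  proof
    assume "mr = 1" then show ?thesis
      using cert_Eq_1[OF refl refl refl, of g s] sign_Eq_1[OF rv] by simp
  next
    assume "mr = 2" then show ?thesis
      using cert_Eq_2[OF refl refl refl, of g s] sign_Eq_2[OF rv] by simp
  qed
  have gp: "0 < g + 1" using g1 by simp
  show ?thesis using neg gp by (simp add: mult_less_0_iff)
qed

lemma A2c_neg:
  fixes mr g s :: real
  assumes m: "mr = 1 \<or> mr = 2" and g1: "1 < g" and g2: "g \<le> 2" and s0: "-1 < s" "s < 0"
  shows "A2c mr g s < 0"
proof -
  have eq: "A2c mr g s = s * (2 - (g-2) * s) * (mr * (g-1) + 1)"
    unfolding A2c_def by (simp add: algebra_simps power2_eq_square)
  have "0 < 2 - (g-2) * s"
  proof -
    have "(g-2) * s \<ge> 0" using g2 s0 by (intro mult_nonpos_nonpos) auto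
    moreover have "(2-g) * (-s) \<le> 1 * 1" using g1 g2 s0 by (intro mult_mono) auto
    moreover have "(g-2) * s = (2-g) * (-s)" by (simp add: algebra_simps)
    ultimately show ?thesis by linarith
  qed
  moreover have "0 < mr * (g-1) + 1" using m g1 by auto
  ultimately show ?thesis using eq s0 by (simp add: mult_neg_pos)
qed

lemma RP_neg:
  fixes mr g s V :: real
  assumes m: "mr = 1 \<or> mr = 2" and g1: "1 < g" and g2: "g \<le> 2" and s1: "-2/(g+1) < s" and s2: "s \<le> -1/2"
    and V: "-2/(g+1) \<le> V"
  shows "RP mr g s V < 0"
proof -
  define V1 where "V1 = -2/(g+1)"
  have V1m: "-1 \<le> V1" using g1 g2 unfolding V1_def by (simp add: field_simps)
  have sm1: "-1 < s" using s1 V1m unfolding V1_def by linarith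
  have A2: "A2c mr g s < 0" using s2 by (intro A2c_neg[OF m g1 g2 sm1]) linarith
  have e: "RP mr g s V = RP mr g s V1 + (V - V1) * (A2c mr g s * (V + V1) + A1c mr g s)"
    unfolding RP_def by (simp add: algebra_simps power2_eq_square)
  have "A2c mr g s * (V + V1) \<le> A2c mr g s * (2 * V1)"
    using A2 V unfolding V1_def by (intro mult_left_mono_neg) auto
  then have "A2c mr g s * (V + V1) + A1c mr g s \<le> 0"
    using RPd_V1_nonpos[OF m g1 s1 s2] unfolding V1_def by (simp add: algebra_simps)
  then have "(V - V1) * (A2c mr g s * (V + V1) + A1c mr g s) \<le> 0"
    using V unfolding V1_def by (intro mult_nonneg_nonpos) auto
  moreover have "RP mr g s V1 < 0" using RP_V1_neg[OF m g1 s1 s2] unfolding V1_def .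
  ultimately show ?thesis using e by linarith
qed

lemma setting:
  fixes g z :: real
  assumes g1: "1 < g" and g2: "g \<le> 2" and z0: "0 < z" and zM: "z \<le> zM g"
  shows "z * (2 - (g-2) * V6 g z) = - V6 g z * (1 + V6 g z)" and "V6 g z \<le> -1/2"
proof -
  define a where "a = (sqrt g + sqrt 2)^2"
  define b where "b = (sqrt g - sqrt 2)^2"
  have sg: "sqrt g * sqrt g = g" using g1 by simp
  have s2: "sqrt 2 * sqrt (2::real) = 2" by simp
  have sgp: "sqrt g > 0" using g1 by simp
  have "sqrt g + sqrt 2 > 0" using sgp by (simp add: add_pos_pos)
  then have apos: "a > 0" unfolding a_def by simp
  have "(sqrt g + sqrt 2) * (sqrt g - sqrt 2) = g - 2"
    using sg s2 by (simp add: algebra_simps)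
  then have ab: "a * b = (g-2)^2" unfolding a_def b_def by (metis power_mult_distrib)
  have apb: "a + b = 2 * g + 4" unfolding a_def b_def using sg s2
    by (simp add: power2_eq_square algebra_simps)
  have "a - b = 4 * (sqrt g * sqrt 2)" unfolding a_def b_def
    by (simp add: power2_eq_square algebra_simps)
  moreover have "0 \<le> sqrt g * sqrt 2" using sgp by simp
  ultimately have ba: "b \<le> a" by linarith
  have zMa: "zM g = 1 / a" unfolding zM_def a_def ..
  have za: "z * a \<le> 1" using zM apos unfolding zMa by (simp add: field_simps)
  have "z * b \<le> z * a" using ba z0 by (intro mult_left_mono) auto
  then have zb: "z * b \<le> 1" using za by linarith
  have "(1 - z * a) * (1 - z * b) = 1 - z * (a + b) + z^2 * (a * b)"
    by (simp add: algebra_simps power2_eq_square)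
  then have disc: "1 - 2 * (g + 2) * z + (g - 2)^2 * z^2 = (1 - z * a) * (1 - z * b)"
    unfolding apb ab by (simp add: algebra_simps)
  have dpos: "0 \<le> 1 - 2 * (g + 2) * z + (g - 2)^2 * z^2" unfolding disc using za zb by simp
  define w where "w = ww g z"
  have w2: "w^2 = 1 - 2 * (g + 2) * z + (g - 2)^2 * z^2" unfolding w_def ww_def by (rule real_sqrt_pow2[OF dpos])
  have w0: "0 \<le> w" unfolding w_def ww_def using dpos by simp
  have s: "V6 g z = (-1 + (g-2) * z - w) / 2" unfolding V6_def w_def ..
  show "z * (2 - (g-2) * V6 g z) = - V6 g z * (1 + V6 g z)" unfolding s using w2
    by (simp add: field_simps power2_eq_square)
  have "(g-2) * z \<le> 0" using g2 z0 by (simp add: mult_nonpos_nonneg)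
  then show "V6 g z \<le> -1/2" unfolding s using w0 by simp
qed

lemma Bk_deriv:
  fixes g z v :: real
  assumes "0 < - kk g z * v"
  shows "(Bk g z has_real_derivative (- kk g z) / (2 * Bk g z v)) (at v)"
proof -
  have "((\<lambda>V. sqrt (- kk g z * V)) has_real_derivative (inverse (sqrt (- kk g z * v)) / 2) * (- kk g z)) (at v)"
    using assms by (intro DERIV_chain2[OF DERIV_real_sqrt]) (auto intro!: derivative_eq_intros)
  then show ?thesis unfolding Bk_def[abs_def] by (simp add: field_simps)
qed

lemma id_phi:
  fixes mr g z k s V :: real
  assumes hz: "z * (2 - (g-2) * s) = - s * (1+s)" and hk: "k * s = - ((1+s)^2)"
  shows "(2 * (- k * V * (1+V+mr * z) + (1+V) * (- (1 + mr * (g-1)/2) * (1+V)^2 + ((mr * (g-1) + mr * z * g * (g-3))/2) * (1+V) - mr * z * g * (g-1)/2))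
          + (1+V) * (k * ((mr+1) * V + 2 * mr * z) + (1+V) * (1 + mr * g * z + V))) * s * (2 - (g-2) * s) = (s - V) * RP mr g s V"
  using hz hk unfolding RP_def A0c_def A1c_def A2c_def
  by algebra

lemma id_gam:
  fixes mr g z k s V :: real
  assumes hz: "z * (2 - (g-2) * s) = - s * (1+s)" and hk: "k * s = - ((1+s)^2)"
  shows "(k * ((mr+1) * V + 2 * mr * z) + (1+V) * (1 + mr * g * z + V)) * s * (2 - (g-2) * s)
     = (V - s) * (s * (2 - (g-2) * s) * V - (2 - (g-2) * s) + mr * (1+s) * (g * s - 2 * (1+s)^2))"
  using hz hk
  by algebra

lemma key_ineq:
  fixes m :: nat and g z V :: real
  assumes m: "m \<in> {1,2}" and g1: "1 < g" and g2: "g \<le> 2" and z0: "0 < z" and zM: "z \<le> zM g"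
    and V1: "V1 g \<le> V" and Vs: "V < V6 g z"
  shows "GG m g z V (Bk g z V) \<noteq> 0"
    and "FF m g z V (Bk g z V) / GG m g z V (Bk g z V) + kk g z / (2 * Bk g z V) < 0"
proof -
  define s where "s = V6 g z"
  define k where "k = kk g z"
  define mr where "mr = real m"
  define B where "B = Bk g z V"
  define D where "D = 2 - (g-2) * s"
  have mr: "mr = 1 \<or> mr = 2" using m unfolding mr_def by auto
  have hz: "z * D = - s * (1+s)" using setting(1)[OF g1 g2 z0 zM] unfolding s_def D_def .
  have s2: "s \<le> -1/2" using setting(2)[OF g1 g2 z0 zM] unfolding s_def .
  have V1e: "V1 g = -2/(g+1)" unfolding V1_def by simp
  have V1m: "-1 < -2/(g+1)" using g1 by (simp add: field_simps)
  have Vm: "-2/(g+1) \<le> V" using V1 V1e by simp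
  have s1: "-2/(g+1) < s" using Vm Vs unfolding s_def by linarith
  have sneg: "s < 0" using s2 by linarith
  have Vneg: "V < 0" using Vs s2 unfolding s_def by linarith
  have V1p: "0 < 1 + V" using Vm V1m by linarith
  have s1p: "0 < 1 + s" using s1 V1m by linarith
  have kdef: "k = - ((1+s)^2) / s" unfolding k_def kk_def s_def ..
  have hk: "k * s = - ((1+s)^2)" unfolding kdef using sneg by simp
  have kpos: "0 < k" unfolding kdef using sneg s1p by (simp add: divide_pos_neg)
  have Dpos: "0 < D"
  proof -
    have "(g-2) * s \<ge> 0" using g2 sneg by (intro mult_nonpos_nonpos) auto
    moreover have "(2-g) * (-s) \<le> 1 * 1" using g1 g2 sneg s1p by (intro mult_mono) auto
    ultimately show ?thesis unfolding D_def by (simp add: algebra_simps)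
  qed
  have kV: "0 < - k * V" using kpos Vneg by (simp add: mult_pos_neg)
  have B2: "B^2 = - k * V" unfolding B_def Bk_def k_def using kV k_def by simp
  have Bpos: "0 < B" unfolding B_def Bk_def using kV k_def by simp
  have RPn: "RP mr g s V < 0" using RP_neg[OF mr g1 g2 s1 s2 Vm] .
  define Gam where "Gam = k * ((mr+1) * V + 2 * mr * z) + (1+V) * (1 + mr * g * z + V)"
  define Phi1 where "Phi1 = - k * V * (1+V+mr * z) + (1+V) * (- (1 + mr * (g-1)/2) * (1+V)^2 + ((mr * (g-1) + mr * z * g * (g-3))/2) * (1+V) - mr * z * g * (g-1)/2)"
  define RG where "RG = s * D * V - D + mr * (1+s) * (g * s - 2 * (1+s)^2)"
  have iP: "(2 * Phi1 + (1+V) * Gam) * s * D = (s - V) * RP mr g s V"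
    using id_phi[OF hz[unfolded D_def] hk, of V mr] unfolding Phi1_def Gam_def D_def .
  have iG: "Gam * s * D = (V - s) * RG"
    using id_gam[OF hz[unfolded D_def] hk, of mr V] unfolding Gam_def RG_def D_def .
  have sD: "s * D < 0" using sneg Dpos by (simp add: mult_neg_pos)
  have N: "0 < 2 * Phi1 + (1+V) * Gam"
  proof -
    have "(s - V) * RP mr g s V < 0" using Vs RPn unfolding s_def by (simp add: mult_pos_neg)
    then have "(2 * Phi1 + (1+V) * Gam) * (s * D) < 0" using iP by (simp add: mult.assoc)
    then show ?thesis using sD by (simp add: mult_less_0_iff)
  qed
  have RGn: "RG < 0"
  proof -
    have "s * V < 1"
    proof -
      have "(-s) * (-V) < 1 * 1" using sneg Vneg s1p V1p by (intro mult_strict_mono) auto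
      then show ?thesis by simp
    qed
    then have "D * (s * V - 1) < 0" using Dpos by (simp add: mult_pos_neg)
    moreover have "mr * (1+s) * (g * s - 2 * (1+s)^2) \<le> 0"
    proof -
      have "g * s < 0" using g1 sneg by (simp add: mult_pos_neg)
      moreover have "0 \<le> (1+s)^2" by simp
      ultimately have "g * s - 2 * (1+s)^2 < 0" by linarith
      moreover have "0 \<le> mr * (1+s)" using mr s1p by auto
      ultimately show ?thesis by (simp add: mult_nonneg_nonpos)
    qed
    ultimately show ?thesis unfolding RG_def by (simp add: algebra_simps)
  qed
  have Gneg: "Gam < 0"
  proof -
    have "0 < (V - s) * RG" using Vs RGn unfolding s_def by (simp add: mult_neg_neg)
    then have g0: "0 < Gam * (s * D)" using iG by (simp add: mult.assoc)
    show ?thesis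
    proof (rule ccontr)
      assume "\<not> Gam < 0"
      then have "0 \<le> Gam" by simp
      then have "Gam * (s * D) \<le> 0" by (rule mult_nonneg_nonpos) (use sD in auto)
      then show False using g0 by linarith
    qed
  qed
  define X where "X = B^2 * (1 + mr * z / (1+V)) - a1 m g * (1+V)^2 + a2 m g z * (1+V) - a3 m g z"
  have FFe: "FF m g z V B = B * X" unfolding FF_def X_def mr_def ..
  have hX: "(1+V) * X = Phi1" unfolding X_def Phi1_def B2 a1_def a2_def a3_def mr_def
    using V1p by (simp add: field_simps)
  have GGe: "GG m g z V B = - V * Gam" unfolding GG_def Gam_def lam_def B2 mr_def
    by (simp add: algebra_simps)
  show "GG m g z V (Bk g z V) \<noteq> 0" using GGe Vneg Gneg unfolding B_def by simp
  have X2: "0 < 2 * X + Gam"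
  proof -
    have "(1+V) * (2 * X + Gam) = 2 * Phi1 + (1+V) * Gam" using hX by (simp add: algebra_simps)
    then show ?thesis using N V1p by (metis zero_less_mult_iff not_less_iff_gr_or_eq)
  qed
  have e1: "B * X / (- V * Gam) + k / (2 * B) = (2 * B^2 * X - k * V * Gam) / (2 * B * (- V * Gam))"
    using Bpos Vneg Gneg by (simp add: field_simps power2_eq_square)
  have e2: "(2 * B^2 * X - k * V * Gam) / (2 * B * (- V * Gam)) = k * (2 * X + Gam) / (2 * B * Gam)"
    unfolding B2 using Bpos Vneg Gneg by (simp add: field_simps)
  have "k * (2 * X + Gam) / (2 * B * Gam) < 0"
    using kpos X2 Bpos Gneg by (intro divide_pos_neg mult_pos_pos) (auto simp: mult_pos_neg)
  then show "FF m g z V (Bk g z V) / GG m g z V (Bk g z V) + kk g z / (2 * Bk g z V) < 0"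
    using e1 e2 FFe GGe unfolding B_def k_def by simp
qed

lemma part1_core:
  fixes m :: nat and g z Vb :: real and C :: "real \<Rightarrow> real"
  assumes m: "m \<in> {1,2}" and g1: "1 < g" and g2: "g \<le> 2" and z0: "0 < z" and zM: "z \<le> zM g"
    and Vb1: "V1 g < Vb" and Vbs: "Vb < V6 g z" and Cb: "Bk g z Vb < C Vb"
    and sol: "solves_ODE_on m g z C {V1 g..Vb}"
  shows "\<forall>V\<in>{V1 g..Vb}. Bk g z V < C V"
proof (rule ccontr)
  assume neg: "\<not> (\<forall>V\<in>{V1 g..Vb}. Bk g z V < C V)"
  define S where "S = {V1 g..Vb}"
  define psi where "psi = (\<lambda>V. C V - Bk g z V)"
  define T where "T = S \<inter> psi -` {..0}"
  have s2: "V6 g z \<le> -1/2" using setting(2)[OF g1 g2 z0 zM] .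
  have derC: "\<And>V. V \<in> S \<Longrightarrow> (C has_real_derivative FF m g z V (C V) / GG m g z V (C V)) (at V within S)"
    using sol unfolding solves_ODE_on_def S_def by blast
  have contC: "continuous_on S C"
    unfolding continuous_on_eq_continuous_within using derC DERIV_continuous by blast
  have contB: "continuous_on S (Bk g z)" unfolding Bk_def[abs_def] by (intro continuous_intros)
  have contP: "continuous_on S psi" unfolding psi_def using contC contB by (intro continuous_intros)
  have clT: "closed T" unfolding T_def S_def using contP[unfolded S_def]
    by (intro continuous_closed_preimage) auto
  obtain V0 where V0: "V0 \<in> S" "\<not> Bk g z V0 < C V0" using neg unfolding S_def by blast
  have TS: "T \<subseteq> S" unfolding T_def by auto
  have Tne: "T \<noteq> {}" using V0 unfolding T_def psi_def by auto
  have bddT: "bdd_above T" using TS unfolding S_def by (meson bdd_above_Icc bdd_above_mono)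
  define v where "v = Sup T"
  have vT: "v \<in> T" unfolding v_def using closed_contains_Sup[OF Tne bddT clT] .
  have upper: "\<And>x. x \<in> T \<Longrightarrow> x \<le> v" unfolding v_def using bddT by (simp add: cSup_upper)
  have vS: "v \<in> S" using vT TS by auto
  have pv: "psi v \<le> 0" using vT unfolding T_def by auto
  have pVb: "0 < psi Vb" unfolding psi_def using Cb by simp
  have vVb: "v < Vb" using vS pv pVb unfolding S_def by (cases "v = Vb") auto
  have "{v..Vb} \<subseteq> S" using vS unfolding S_def by auto
  then have "continuous_on {v..Vb} psi" by (rule continuous_on_subset[OF contP])
  then obtain x where x: "v \<le> x" "x \<le> Vb" "psi x = 0" using IVT'[of psi v 0 Vb] pv pVb vVb by auto
  have "x \<in> T" using x vS unfolding T_def S_def by auto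
  then have "x = v" using upper x by force
  then have pv0: "psi v = 0" using x by simp
  then have Cv: "C v = Bk g z v" unfolding psi_def by simp
  have vV1: "V1 g \<le> v" using vS unfolding S_def by simp
  have vs: "v < V6 g z" using vVb Vbs by linarith
  have kpos: "0 < - kk g z * v"
  proof -
    have "V1 g > -1" unfolding V1_def using g1 by (simp add: field_simps)
    then have s1p: "0 < 1 + V6 g z" using vV1 vs by linarith
    have sneg: "V6 g z < 0" using s2 by linarith
    have "0 < kk g z" unfolding kk_def using s1p sneg by (simp add: divide_pos_neg)
    moreover have "v < 0" using vs sneg by linarith
    ultimately show ?thesis by (simp add: mult_pos_neg)
  qed
  have ki: "FF m g z v (Bk g z v) / GG m g z v (Bk g z v) + kk g z / (2 * Bk g z v) < 0"
    using key_ineq(2)[OF m g1 g2 z0 zM vV1 vs] .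
  have dB: "(Bk g z has_real_derivative (- kk g z) / (2 * Bk g z v)) (at v within S)"
    using Bk_deriv[OF kpos] by (rule has_field_derivative_at_within)
  have dP: "(psi has_real_derivative (FF m g z v (C v) / GG m g z v (C v) - (- kk g z) / (2 * Bk g z v))) (at v within S)"
    unfolding psi_def using derC[OF vS] dB by (rule DERIV_diff)
  have dneg: "FF m g z v (C v) / GG m g z v (C v) - (- kk g z) / (2 * Bk g z v) < 0"
    using ki unfolding Cv by simp
  obtain d where d: "d > 0" "\<And>h. h > 0 \<Longrightarrow> v + h \<in> S \<Longrightarrow> h < d \<Longrightarrow> psi v > psi (v + h)"
    using has_real_derivative_neg_dec_right[OF dP dneg] by blast
  define h where "h = min (d/2) (Vb - v)"
  have h0: "h > 0" unfolding h_def using d vVb by simp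
  have hS: "v + h \<in> S" unfolding h_def S_def using vV1 vVb d by auto
  have "psi (v + h) < 0" using d(2)[OF h0 hS] pv0 h_def d by auto
  then have "v + h \<in> T" using hS unfolding T_def by auto
  then have "v + h \<le> v" by (rule upper)
  then show False using h0 by simp
qed

lemma id_a:
  fixes mr g z s :: real
  assumes hz: "z * (2 - (g-2) * s) = - s * (1+s)"
  shows "(- (2 * (1+s) * ((mr+1) * s + 2 * mr * z))) * (2 - (g-2) * s) = 2 * s * (1+s) * ((mr+1) * g * s - 2 * (1+s))"
  using hz by algebra

lemma id_c0:
  fixes mr g z s :: real
  assumes hz: "z * (2 - (g-2) * s) = - s * (1+s)"
  shows "((1+s) * (- mr * z - 2 * (1 + mr * (g-1)/2) * (1+s) + (mr * (g-1) + mr * z * g * (g-3))/2)) * (2 - (g-2) * s) = (1+s) * qc mr g s"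
  using hz unfolding qc_def by algebra

lemma id_Q:
  fixes mr g z s :: real
  assumes hz: "z * (2 - (g-2) * s) = - s * (1+s)"
  shows "((- (2 * (1+s) * ((mr+1) * s + 2 * mr * z))) * (1+s)^2
     + 2 * ((3 * (1+s)^2 + 3 * mr * z * (1+s) + (- (1 + mr * (g-1)/2) * (1+s)^2 + ((mr * (g-1) + mr * z * g * (g-3))/2) * (1+s) - mr * z * g * (g-1)/2))
          - ((1+s)^2 * (mr+1) - ((1+s) * (1 + mr * g * z + s) + s * (1 + mr * g * z + s) + s * (1+s)))) * (1+s) * s
     + 4 * ((1+s) * (- mr * z - 2 * (1 + mr * (g-1)/2) * (1+s) + (mr * (g-1) + mr * z * g * (g-3))/2)) * s^2) * (2 - (g-2) * s)
    = - 2 * s * RP mr g s s"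
  using hz unfolding RP_def A0c_def A1c_def A2c_def by algebra

lemma quad_root:
  fixes a b c0 c t :: real
  assumes a: "0 < a" and c0: "c0 \<le> 0" and c: "c < 0" and t: "t < 0"
    and root: "a * c^2 + b * c + c0 = 0" and Qt: "a * t^2 + b * t + c0 < 0"
  shows "c < t"
proof (rule ccontr)
  assume "\<not> c < t"
  then have ct: "t \<le> c" by simp
  have idt: "t * (a * c^2 + b * c + c0) = c * (a * t^2 + b * t + c0) + (t - c) * c0 + a * c * t * (c - t)"
    by algebra
  have 1: "0 < c * (a * t^2 + b * t + c0)" using c Qt by (simp add: mult_neg_neg)
  have 2: "0 \<le> (t - c) * c0" using ct c0 by (simp add: mult_nonpos_nonpos)
  have "0 < c * t" using c t by (simp add: mult_neg_neg)
  then have "0 \<le> a * (c * t) * (c - t)" using a ct by (simp add: mult_nonneg_nonneg)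
  then have 3: "0 \<le> a * c * t * (c - t)" by (simp add: mult.assoc)
  have "t * (a * c^2 + b * c + c0) = 0" using root by simp
  then show False using idt 1 2 3 by linarith
qed

lemma zm_pos: "1 < g \<Longrightarrow> 0 < zm g"
  unfolding zm_def by (simp add: divide_pos_pos)

lemma zg_pos:
  fixes m :: nat and g :: real
  assumes m: "m \<in> {1,2}" and g1: "1 < g"
  shows "0 < zg m g"
proof (cases "m = 1")
  case True
  have "sqrt (g^2) < sqrt (g^2 + (g-1)^2)" using g1 by (intro real_sqrt_less_mono) simp
  then have "g < sqrt (g^2 + (g-1)^2)" using g1 by simp
  moreover have "0 < g * (g - 1)" using g1 by simp
  ultimately show ?thesis unfolding zg_def using True by (simp add: divide_pos_pos)
next
  case False
  define b where "b = 2 * g^2 - g + 1"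
  define q where "q = 4 * g * (g - 1) + 8 / 3"
  have qp: "0 < q" unfolding q_def using g1 by (simp add: add_pos_pos)
  have bp: "0 < b" unfolding b_def using g1 by (simp add: power2_eq_square) (smt (verit) mult_le_cancel_left1)
  have "0 < 2 * g * (g - 1) * q" using g1 qp by simp
  then have "sqrt (b^2) < sqrt (b^2 + 2 * g * (g - 1) * q)" by (intro real_sqrt_less_mono) simp
  then have "b < sqrt (b^2 + 2 * g * (g - 1) * q)" using bp by simp
  moreover have "0 < g * q" using g1 qp by simp
  ultimately show ?thesis unfolding zg_def using False b_def q_def by (simp add: divide_pos_pos)
qed

lemma part2_core:
  fixes m :: nat and g z Vq :: real and C :: "real \<Rightarrow> real"
  assumes m: "m \<in> {1,2}" and g1: "1 < g" and g2: "g \<le> 2" and z0: "0 < z" and zM: "z \<le> zM g"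
    and P6: "is_P6_solution m g z C" and Vq1: "V1 g \<le> Vq" and Vqs: "Vq < V6 g z"
  shows "Bk g z Vq < C Vq"
proof -
  define s where "s = V6 g z"
  define k where "k = kk g z"
  define mr where "mr = real m"
  define D where "D = 2 - (g-2) * s"
  define S2 where "S2 = {V1 g..s}"
  have mr: "mr = 1 \<or> mr = 2" using m unfolding mr_def by auto
  have hz: "z * D = - s * (1+s)" using setting(1)[OF g1 g2 z0 zM] unfolding s_def D_def .
  have s2: "s \<le> -1/2" using setting(2)[OF g1 g2 z0 zM] unfolding s_def .
  have V1e: "V1 g = -2/(g+1)" unfolding V1_def by simp
  have V1m: "-1 < -2/(g+1)" using g1 by (simp add: field_simps)
  have s1: "-2/(g+1) < s" using Vq1 Vqs V1e unfolding s_def by linarith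
  have sneg: "s < 0" using s2 by linarith
  have s1p: "0 < 1 + s" using s1 V1m by linarith
  have kdef: "k = - ((1+s)^2) / s" unfolding k_def kk_def s_def ..
  have hk: "k * s = - ((1+s)^2)" unfolding kdef using sneg by simp
  have kpos: "0 < k" unfolding kdef using sneg s1p by (simp add: divide_pos_neg)
  have Dpos: "0 < D"
  proof -
    have "(g-2) * s \<ge> 0" using g2 sneg by (intro mult_nonpos_nonpos) auto
    moreover have "(2-g) * (-s) \<le> 1 * 1" using g1 g2 sneg s1p by (intro mult_mono) auto
    ultimately show ?thesis unfolding D_def by (simp add: algebra_simps)
  qed
  have Cpos: "\<And>V. V \<in> S2 \<Longrightarrow> 0 < C V" using P6 unfolding is_P6_solution_def S2_def s_def by auto
  have Cs: "C s = 1 + s" using P6 unfolding is_P6_solution_def s_def C6_def by auto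
  obtain c where c1: "is_c1 m g z c" and dc: "(C has_real_derivative c) (at s within S2)"
    using P6 unfolding is_P6_solution_def s_def S2_def by blast
  have sol: "solves_ODE_on m g z C {V1 g..<s}" using P6 unfolding is_P6_solution_def s_def by auto
  have C6e: "C6 g z = 1 + s" unfolding C6_def s_def ..
  define GCv where "GCv = 2 * (1+s) * ((mr+1) * s + 2 * mr * z)"
  define GVv where "GVv = (1+s)^2 * (mr+1) - ((1+s) * (1 + mr * g * z + s) + s * (1 + mr * g * z + s) + s * (1+s))"
  define FCv where "FCv = 3 * (1+s)^2 + 3 * mr * z * (1+s) + (- (1 + mr * (g-1)/2) * (1+s)^2 + ((mr * (g-1) + mr * z * g * (g-3))/2) * (1+s) - mr * z * g * (g-1)/2)"
  define FVv where "FVv = (1+s) * (- mr * z - 2 * (1 + mr * (g-1)/2) * (1+s) + (mr * (g-1) + mr * z * g * (g-3))/2)"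
  have dGC: "((\<lambda>C. GG m g z s C) has_real_derivative GCv) (at (1+s))"
    unfolding GG_def GCv_def mr_def
    by (auto intro!: derivative_eq_intros simp: algebra_simps)
  have dGV: "((\<lambda>V. GG m g z V (1+s)) has_real_derivative GVv) (at s)"
    unfolding GG_def GVv_def mr_def lam_def
    by (auto intro!: derivative_eq_intros simp: algebra_simps)
  have dFC: "((\<lambda>C. FF m g z s C) has_real_derivative FCv) (at (1+s))"
  proof -
    define al where "al = 1 + mr * z / (1+s)"
    define be where "be = - a1 m g * (1+s)^2 + a2 m g z * (1+s) - a3 m g z"
    have fe: "(\<lambda>C. FF m g z s C) = (\<lambda>C. C^3 * al + C * be)"
      unfolding FF_def al_def be_def mr_def by (rule ext) (simp add: algebra_simps power3_eq_cube power2_eq_square)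
    have "((\<lambda>C. C^3 * al + C * be) has_real_derivative (3 * (1+s)^2 * al + be)) (at (1+s))"
      by (auto intro!: derivative_eq_intros simp: power2_eq_square)
    moreover have "3 * (1+s)^2 * al + be = FCv"
      unfolding al_def be_def FCv_def a1_def a2_def a3_def mr_def using s1p
      by (simp add: field_simps power2_eq_square)
    ultimately show ?thesis unfolding fe by simp
  qed
  have dFV: "((\<lambda>V. FF m g z V (1+s)) has_real_derivative FVv) (at s)"
  proof -
    define c3 where "c3 = (1+s)^3 * mr * z"
    define A where "A = a1 m g"
    define B where "B = a2 m g z"
    define Cc where "Cc = a3 m g z"
    have fe: "(\<lambda>V. FF m g z V (1+s)) = (\<lambda>V. c3 / (1+V) + ((1+s)^3 - (1+s) * A * (1+V)^2 + (1+s) * B * (1+V) - (1+s) * Cc))"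
    proof (rule ext)
      fix V
      have "(1+s) * ((1+s)^2 * (1 + real m * z / (1+V))) = (1+s)^3 * (1 + real m * z / (1+V))"
        by (simp add: power3_eq_cube power2_eq_square mult.assoc)
      also have "\<dots> = (1+s)^3 + (1+s)^3 * (real m * z / (1+V))" by (simp add: distrib_left)
      also have "\<dots> = (1+s)^3 + c3 / (1+V)" unfolding c3_def mr_def by (simp add: mult.assoc)
      finally have "(1+s) * ((1+s)^2 * (1 + real m * z / (1+V))) = (1+s)^3 + c3 / (1+V)" .
      then show "FF m g z V (1+s) = c3 / (1+V) + ((1+s)^3 - (1+s) * A * (1+V)^2 + (1+s) * B * (1+V) - (1+s) * Cc)"
        unfolding FF_def A_def B_def Cc_def by (simp add: algebra_simps)
    qed
    have d1: "((\<lambda>V. c3 / (1+V)) has_real_derivative (- c3 / (1+s)^2)) (at s)"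
      using s1p by (auto intro!: derivative_eq_intros simp: field_simps power2_eq_square)
    have d2: "((\<lambda>V. (1+s)^3 - (1+s) * A * (1+V)^2 + (1+s) * B * (1+V) - (1+s) * Cc) has_real_derivative
        (- ((1+s) * A * (2 * (1+s))) + (1+s) * B)) (at s)"
      by (auto intro!: derivative_eq_intros simp: algebra_simps)
    have "- c3 / (1+s)^2 + (- ((1+s) * A * (2 * (1+s))) + (1+s) * B) = FVv"
    proof -
      have c3e: "c3 = (1+s)^2 * ((1+s) * mr * z)" unfolding c3_def by (simp add: power3_eq_cube power2_eq_square mult.assoc)
      have "(1+s)^2 \<noteq> 0" using s1p by simp
      then have "c3 / (1+s)^2 = (1+s) * mr * z" unfolding c3e by simp
      then show ?thesis unfolding FVv_def A_def B_def a1_def a2_def mr_def by (simp add: algebra_simps)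
    qed
    then show ?thesis unfolding fe using DERIV_add[OF d1 d2] by simp
  qed
  have root: "- GCv * c^2 + (FCv - GVv) * c + FVv = 0" and cneg: "c < 0"
    using c1 unfolding is_c1_def Let_def C6e s_def[symmetric]
      DERIV_imp_deriv[OF dGC] DERIV_imp_deriv[OF dGV] DERIV_imp_deriv[OF dFC] DERIV_imp_deriv[OF dFV]
    by auto
  have apos: "0 < - GCv"
  proof -
    have e: "(- GCv) * D = 2 * s * (1+s) * ((mr+1) * g * s - 2 * (1+s))"
      unfolding GCv_def D_def using id_a[OF hz[unfolded D_def]] .
    define P where "P = (mr+1) * g * s"
    have "P < 0" unfolding P_def using mr g1 sneg by (auto simp: mult_pos_neg)
    then have "P - 2 * (1+s) < 0" using s1p by (simp add: algebra_simps)
    then have "(mr+1) * g * s - 2 * (1+s) < 0" unfolding P_def .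
    then have "0 < s * ((mr+1) * g * s - 2 * (1+s))" using sneg by (simp add: mult_neg_neg)
    moreover have "0 < 2 * (1+s)" using s1p by simp
    ultimately have "0 < (2 * (1+s)) * (s * ((mr+1) * g * s - 2 * (1+s)))" by (simp only: mult_pos_pos)
    moreover have "(2 * (1+s)) * (s * ((mr+1) * g * s - 2 * (1+s))) = 2 * s * (1+s) * ((mr+1) * g * s - 2 * (1+s))"
      by algebra
    ultimately have "0 < 2 * s * (1+s) * ((mr+1) * g * s - 2 * (1+s))" by metis
    then have "0 < (- GCv) * D" using e by simp
    then show ?thesis using Dpos by (auto simp add: zero_less_mult_iff mult_less_0_iff)
  qed
  have c0: "FVv \<le> 0"
  proof -
    have e: "FVv * D = (1+s) * qc mr g s"
      unfolding FVv_def D_def using id_c0[OF hz[unfolded D_def]] .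
    have "(1+s) * qc mr g s \<le> 0" using qc_nonpos[OF mr g1 s1 s2] s1p by (simp add: mult_nonneg_nonpos)
    then have "FVv * D \<le> 0" using e by simp
    then show ?thesis using Dpos by (simp add: mult_le_0_iff)
  qed
  define t where "t = (1+s) / (2 * s)"
  have tneg: "t < 0" unfolding t_def using s1p sneg by (simp add: divide_pos_neg)
  have Qt: "(- GCv) * t^2 + (FCv - GVv) * t + FVv < 0"
  proof -
    have e: "((- GCv) * (1+s)^2 + 2 * (FCv - GVv) * (1+s) * s + 4 * FVv * s^2) * D = - 2 * s * RP mr g s s"
      unfolding GCv_def FCv_def GVv_def FVv_def D_def using id_Q[OF hz[unfolded D_def]] by (simp add: mult.assoc)
    have "RP mr g s s < 0" using RP_neg[OF mr g1 g2 s1 s2] s1 by simp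
    then have "- 2 * s * RP mr g s s < 0" using sneg by (simp add: mult_neg_neg mult_pos_neg)
    then have q4: "(- GCv) * (1+s)^2 + 2 * (FCv - GVv) * (1+s) * s + 4 * FVv * s^2 < 0"
      using e Dpos by (metis mult_less_0_iff not_less_iff_gr_or_eq)
    have "4 * s^2 * ((- GCv) * t^2 + (FCv - GVv) * t + FVv) = (- GCv) * (1+s)^2 + 2 * (FCv - GVv) * (1+s) * s + 4 * FVv * s^2"
      unfolding t_def using sneg by (simp add: field_simps power2_eq_square)
    then have "4 * s^2 * ((- GCv) * t^2 + (FCv - GVv) * t + FVv) < 0" using q4 by simp
    moreover have "0 < 4 * s^2" using sneg by simp
    ultimately show ?thesis by (simp add: mult_less_0_iff)
  qed
  have ct: "c < t" using quad_root[OF apos c0 cneg tneg _ Qt] root by simp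
  have hd: "2 * (1+s) * c + k < 0"
  proof -
    have "2 * (1+s) * c < 2 * (1+s) * t" using ct s1p by simp
    moreover have "2 * (1+s) * t = - k" unfolding t_def kdef using sneg by (simp add: field_simps power2_eq_square)
    ultimately show ?thesis by linarith
  qed
  define h where "h = (\<lambda>V. C V * C V + k * V)"
  have dh: "(h has_real_derivative (c * C s + C s * c + k * 1)) (at s within S2)"
    unfolding h_def using DERIV_add[OF DERIV_mult[OF dc dc] DERIV_cmult[OF DERIV_ident, of k]] by simp
  have dhneg: "c * C s + C s * c + k * 1 < 0" using hd Cs by (simp add: algebra_simps)
  obtain d where d: "d > 0" "\<And>e. e > 0 \<Longrightarrow> s - e \<in> S2 \<Longrightarrow> e < d \<Longrightarrow> h s < h (s - e)"
    using has_real_derivative_neg_dec_left[OF dh dhneg] by blast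
  have hs: "h s = 0" unfolding h_def Cs using hk by (simp add: algebra_simps power2_eq_square)
  have above: "Bk g z V < C V" if V: "V \<in> S2" "0 < h V" "V < s" for V
  proof -
    have "- k * V < C V * C V" using V(2) unfolding h_def by simp
    then have "sqrt (- k * V) < sqrt (C V * C V)" by (rule real_sqrt_less_mono)
    then show ?thesis using Cpos[OF V(1)] unfolding Bk_def k_def by simp
  qed
  have V1s: "V1 g \<le> s" using Vq1 Vqs unfolding s_def by linarith
  show ?thesis
  proof (cases "s - d < Vq")
    case True
    have "h s < h (s - (s - Vq))" using d(2)[of "s - Vq"] True Vqs Vq1 unfolding s_def S2_def by auto
    then have "0 < h Vq" using hs by simp
    then show ?thesis using above[of Vq] Vq1 Vqs unfolding S2_def s_def by auto
  next
    case False
    define Vb where "Vb = s - d/2"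
    have Vb: "Vq < Vb" "Vb < s" "V1 g < Vb" using False d Vq1 unfolding Vb_def by auto
    have "h s < h (s - d/2)" using d(2)[of "d/2"] d Vb unfolding Vb_def S2_def by auto
    then have "0 < h Vb" using hs unfolding Vb_def by simp
    then have CbB: "Bk g z Vb < C Vb" using above[of Vb] Vb unfolding S2_def by auto
    have solb: "solves_ODE_on m g z C {V1 g..Vb}"
      unfolding solves_ODE_on_def
    proof
      fix V assume V: "V \<in> {V1 g..Vb}"
      then have V': "V \<in> {V1 g..<s}" using Vb by auto
      have "GG m g z V (C V) \<noteq> 0 \<and> (C has_real_derivative FF m g z V (C V) / GG m g z V (C V)) (at V within {V1 g..<s})"
        using sol V' unfolding solves_ODE_on_def by blast
      moreover have "{V1 g..Vb} \<subseteq> {V1 g..<s}" using Vb by auto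
      ultimately show "GG m g z V (C V) \<noteq> 0 \<and> (C has_real_derivative FF m g z V (C V) / GG m g z V (C V)) (at V within {V1 g..Vb})"
        using DERIV_subset by blast
    qed
    have "\<forall>V\<in>{V1 g..Vb}. Bk g z V < C V"
      using part1_core[OF m g1 g2 z0 zM Vb(3) _ CbB solb] Vb unfolding s_def by auto
    then show ?thesis using Vq1 Vb by auto
  qed
qed

theorem mainTheorem7:
  fixes m :: nat and g :: real
  assumes "m \<in> {1, 2}" and "1 < g" and "g \<le> 2"
  shows "(\<forall>z \<in> {zm g..zM g}. \<forall>Vb Cb. \<forall>C :: real \<Rightarrow> real.
            V1 g < Vb \<and> Vb < V6 g z \<and> Cb > Bk g z Vb \<and>
            solves_ODE_on m g z C {V1 g..Vb} \<and> C Vb = Cb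
            \<longrightarrow> (\<forall>V \<in> {V1 g..Vb}. C V > Bk g z V))
       \<and> (\<forall>z \<in> {zg m g..zM g}. \<forall>C :: real \<Rightarrow> real.
            is_P6_solution m g z C \<longrightarrow> (\<forall>V \<in> {V1 g..<V6 g z}. C V > Bk g z V))"
proof (intro conjI ballI allI impI)
  fix z Vb Cb and C :: "real \<Rightarrow> real" and V
  assume z: "z \<in> {zm g..zM g}"
    and H: "V1 g < Vb \<and> Vb < V6 g z \<and> Cb > Bk g z Vb \<and> solves_ODE_on m g z C {V1 g..Vb} \<and> C Vb = Cb"
    and V: "V \<in> {V1 g..Vb}"
  have z0: "0 < z" using zm_pos[OF assms(2)] z by simp
  have zM: "z \<le> zM g" using z by simp
  have Cb: "Bk g z Vb < C Vb" using H by simp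
  have H1: "V1 g < Vb" and H2: "Vb < V6 g z" and H3: "solves_ODE_on m g z C {V1 g..Vb}" using H by auto
  show "C V > Bk g z V"
    using part1_core[OF assms(1,2,3) z0 zM H1 H2 Cb H3] V by auto
next
  fix z and C :: "real \<Rightarrow> real" and V
  assume z: "z \<in> {zg m g..zM g}" and P6: "is_P6_solution m g z C" and V: "V \<in> {V1 g..<V6 g z}"
  have z0: "0 < z" using zg_pos[OF assms(1,2)] z by simp
  have zM: "z \<le> zM g" using z by simp
  show "C V > Bk g z V" using part2_core[OF assms(1,2,3) z0 zM P6] V by auto
qed

end
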